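(* Let $\Theta\subset\mathbb{R}^m$ be a nonempty polyhedral convex set, $g:\mathbb{R}^n\to\mathbb{R}^m$ be $\mathcal C^2$-smooth, $\Gamma:=\{x:g(x)\in\Theta\}$, and suppose MSCQ holds at $\bar x\in\Gamma$. Let $\bar v\in N_\Gamma(\bar x)$, and define $P(\bar x,\bar v):=\{y\in\mathbb{R}^m:\bar v=\nabla g(\bar x)^*y,\ y\in N_\Theta(g(\bar x))\}$ and, for $v\in K_\Gamma(\bar x,\bar v)$, $S(v):=\operatorname{argmax}\{\langle v,\nabla^2\langle y,g\rangle(\bar x)v\rangle: y\in P(\bar x,\bar v)\}$. Then $S(v)\neq\emptyset$ for every $v\in K_\Gamma(\bar x,\bar v)$.
   Context: MSCQ at $\bar x\in\Gamma$: there are a neighborhood $U$ of $\bar x$ and $\kappa>0$ with $\operatorname{dist}(x;\Gamma)\le\kappa\operatorname{dist}(g(x);\Theta)$ for all $x\in U$. $N_\Gamma$ is the limiting (Mordukhovich) normal cone; $N_\Theta$ the convex normal cone. Tangent cone $T_\Omega(\bar x):=\{w:\exists t_k\downarrow0,w_k\to w,\bar x+t_kw_k\in\Omega\}$; critical cone $K_\Omega(\bar x,\bar v):=T_\Omega(\bar x)\cap\{\bar v\}^\perp$. $\nabla^2\langle y,g\rangle(\bar x)$ is the Hessian of $x\mapsto\langle y,g(x)\rangle$ at $\bar x$. *)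

theory Defs
  imports "HOL-Analysis.Analysis"
begin

definition regular_normal_cone :: "'a::euclidean_space set \<Rightarrow> 'a \<Rightarrow> 'a set" where
  "regular_normal_cone \<Omega> x =
     (if x \<in> \<Omega> then
        {v. \<forall>\<epsilon>>0. \<exists>\<delta>>0. \<forall>u\<in>\<Omega>. norm (u - x) < \<delta> \<longrightarrow> v \<bullet> (u - x) \<le> \<epsilon> * norm (u - x)}
      else {})"

definition limiting_normal_cone :: "'a::euclidean_space set \<Rightarrow> 'a \<Rightarrow> 'a set" where
  "limiting_normal_cone \<Omega> x =
     (if x \<in> \<Omega> then
        {v. \<exists>xs vs. (\<forall>k. xs k \<in> \<Omega> \<and> vs k \<in> regular_normal_cone \<Omega> (xs k))
                    \<and> xs \<longlonglongrightarrow> x \<and> vs \<longlonglongrightarrow> v}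
      else {})"

definition convex_normal_cone :: "'a::euclidean_space set \<Rightarrow> 'a \<Rightarrow> 'a set" where
  "convex_normal_cone \<Theta> z = (if z \<in> \<Theta> then {y. \<forall>w\<in>\<Theta>. y \<bullet> (w - z) \<le> 0} else {})"

definition tangent_cone :: "'a::euclidean_space set \<Rightarrow> 'a \<Rightarrow> 'a set" where
  "tangent_cone \<Omega> x =
     {w. \<exists>t ws. (\<forall>k. t k > 0 \<and> x + t k *\<^sub>R ws k \<in> \<Omega>) \<and> t \<longlonglongrightarrow> 0 \<and> ws \<longlonglongrightarrow> w}"

definition critical_cone :: "'a::euclidean_space set \<Rightarrow> 'a \<Rightarrow> 'a \<Rightarrow> 'a set" where
  "critical_cone \<Omega> x v = tangent_cone \<Omega> x \<inter> {w. v \<bullet> w = 0}"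

definition MSCQ :: "('a::euclidean_space \<Rightarrow> 'b::euclidean_space) \<Rightarrow> 'b set \<Rightarrow> 'a \<Rightarrow> bool" where
  "MSCQ g \<Theta> xbar \<longleftrightarrow>
     (\<exists>U \<kappa>. open U \<and> xbar \<in> U \<and> \<kappa> > 0 \<and>
        (\<forall>x\<in>U. infdist x {z. g z \<in> \<Theta>} \<le> \<kappa> * infdist (g x) \<Theta>))"

end

theory Submission
  imports Defs
begin


lemma poly_repr:
  fixes \<Theta> :: "'b::euclidean_space set"
  assumes "polyhedron \<Theta>"
  obtains F :: "'b set set" and a b where "finite F" "\<Theta> = {x. \<forall>h\<in>F. a h \<bullet> x \<le> b h}"
proof -
  obtain F where F: "finite F" "\<Theta> = \<Inter>F" "\<forall>h\<in>F. \<exists>a b. a \<noteq> 0 \<and> h = {x. a \<bullet> x \<le> b}"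
    using assms unfolding polyhedron_def by blast
  then obtain a b where ab: "\<forall>h\<in>F. h = {x. a h \<bullet> x \<le> b h}" by metis
  have "\<Theta> = {x. \<forall>h\<in>F. a h \<bullet> x \<le> b h}"
    using F(2) ab by blast
  then show ?thesis using F(1) that by blast
qed

definition act :: "'c set \<Rightarrow> ('c \<Rightarrow> 'b::euclidean_space) \<Rightarrow> ('c \<Rightarrow> real) \<Rightarrow> 'b \<Rightarrow> 'c set" where
  "act F a b z = {h\<in>F. a h \<bullet> z = b h}"

definition Kc :: "'c set \<Rightarrow> ('c \<Rightarrow> 'b::euclidean_space) \<Rightarrow> ('c \<Rightarrow> real) \<Rightarrow> 'b \<Rightarrow> 'b set" where
  "Kc F a b z = {d. \<forall>h\<in>act F a b z. a h \<bullet> d \<le> 0}"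

definition polar :: "'b::euclidean_space set \<Rightarrow> 'b set" where
  "polar K = {y. \<forall>d\<in>K. y \<bullet> d \<le> 0}"

lemma ev_small: "0 < (e::real) \<Longrightarrow> eventually (\<lambda>t. t * c < e) (at_right 0)"
proof -
  assume e: "0 < e"
  have "((\<lambda>t::real. t * c) \<longlongrightarrow> 0 * c) (at_right 0)"
    by (intro tendsto_intros)
  then show ?thesis using e by (simp add: order_tendstoD(2))
qed

lemma feas:
  fixes a :: "'c \<Rightarrow> 'b::euclidean_space"
  assumes fin: "finite F" and z: "\<forall>h\<in>F. a h \<bullet> z \<le> b h" and d: "d \<in> Kc F a b z"
  shows "eventually (\<lambda>t. \<forall>h\<in>F. a h \<bullet> (z + t *\<^sub>R d) \<le> b h) (at_right 0)"
proof -
  have "eventually (\<lambda>t. a h \<bullet> (z + t *\<^sub>R d) \<le> b h) (at_right 0)" if h: "h \<in> F" for h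
  proof (cases "a h \<bullet> z = b h")
    case True
    then have "a h \<bullet> d \<le> 0" using d h unfolding Kc_def act_def by auto
    moreover have "eventually (\<lambda>t::real. 0 < t) (at_right 0)" by (simp add: eventually_at_filter)
    ultimately show ?thesis
      by (auto elim!: eventually_mono simp: inner_add_right True mult_nonneg_nonpos)
  next
    case False
    then have "0 < b h - a h \<bullet> z" using z h by force
    from ev_small[OF this, of "a h \<bullet> d"] show ?thesis
      by eventually_elim (simp add: inner_add_right mult.commute)
  qed
  then show ?thesis using fin by (simp add: eventually_ball_finite)
qed

lemma normal_cone_sub:
  fixes a :: "'c \<Rightarrow> 'b::euclidean_space"
  assumes "\<Theta> = {x. \<forall>h\<in>F. a h \<bullet> x \<le> b h}" "z \<in> \<Theta>"
  shows "convex_cone hull (a ` act F a b z) \<subseteq> convex_normal_cone \<Theta> z"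
proof (rule hull_minimal)
  show "a ` act F a b z \<subseteq> convex_normal_cone \<Theta> z"
    using assms unfolding act_def convex_normal_cone_def
    by (auto simp: inner_diff_right)
  show "convex_cone (convex_normal_cone \<Theta> z)"
    unfolding convex_cone_def convex_normal_cone_def conic_def
  proof (intro conjI)
    show "convex (if z \<in> \<Theta> then {y. \<forall>w\<in>\<Theta>. y \<bullet> (w - z) \<le> 0} else {})"
      using assms(2) by (simp add: convex_def inner_add_left) 
        (smt (verit, best) mult_nonneg_nonpos)
  qed (use assms(2) in \<open>auto simp: mult_nonneg_nonpos intro: exI[of _ 0]\<close>)
qed

lemma farkas:
  fixes a :: "'c \<Rightarrow> 'b::euclidean_space"
  assumes fin: "finite F" and th: "\<Theta> = {x. \<forall>h\<in>F. a h \<bullet> x \<le> b h}" and z: "z \<in> \<Theta>"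
  shows "convex_normal_cone \<Theta> z \<subseteq> convex_cone hull (a ` act F a b z)"
proof
  fix y assume y: "y \<in> convex_normal_cone \<Theta> z"
  let ?C = "convex_cone hull (a ` act F a b z)"
  show "y \<in> ?C"
  proof (rule ccontr)
    assume ny: "y \<notin> ?C"
    have fa: "finite (a ` act F a b z)" using fin unfolding act_def by auto
    obtain c e where ce: "c \<bullet> y < e" "\<forall>x\<in>?C. c \<bullet> x > e"
      using separating_hyperplane_closed_point[OF convex_convex_cone_hull closed_convex_cone_hull[OF fa] ny]
      by blast
    have e0: "e < 0" using ce(2) convex_cone_hull_contains_0 by fastforce
    have cpos: "c \<bullet> x \<ge> 0" if "x \<in> ?C" for x
    proof (rule ccontr)
      assume "\<not> 0 \<le> c \<bullet> x"
      then have neg: "c \<bullet> x < 0" by simp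
      define s where "s = e / (c \<bullet> x)"
      have s0: "s \<ge> 0" using neg e0 by (simp add: s_def divide_nonpos_neg)
      have "s *\<^sub>R x \<in> ?C" using that s0 by (simp add: convex_cone_hull_mul)
      then have "c \<bullet> (s *\<^sub>R x) > e" using ce by blast
      moreover have "c \<bullet> (s *\<^sub>R x) = e" using neg by (simp add: s_def)
      ultimately show False by simp
    qed
    have dK: "- c \<in> Kc F a b z"
      unfolding Kc_def
    proof (clarify)
      fix h assume "h \<in> act F a b z"
      then have "a h \<in> ?C" by (simp add: hull_inc)
      then show "a h \<bullet> - c \<le> 0" using cpos[of "a h"] by (simp add: inner_commute)
    qed
    have zF: "\<forall>h\<in>F. a h \<bullet> z \<le> b h" using z th by auto
    from feas[OF fin zF dK] have "eventually (\<lambda>t. 0 < t \<and> z + t *\<^sub>R - c \<in> \<Theta>) (at_right 0)"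
      using th by (auto simp: eventually_conj_iff eventually_at_right_less)
    then obtain t where t: "0 < t" "z + t *\<^sub>R - c \<in> \<Theta>"
      using eventually_happens[of _ "at_right (0::real)"] by (auto simp: trivial_limit_at_right_real)
    have "y \<bullet> ((z + t *\<^sub>R - c) - z) \<le> 0" using y t z unfolding convex_normal_cone_def by auto
    then have "t * (c \<bullet> y) \<ge> 0" by (simp add: inner_commute)
    then have "c \<bullet> y \<ge> 0" using t(1) by (simp add: zero_le_mult_iff)
    then show False using ce(1) e0 by simp
  qed
qed



lemma infdist_lt:
  assumes "A \<noteq> {}" "infdist y A < e"
  obtains a where "a \<in> A" "dist y a < e"
proof -
  have "(INF a\<in>A. dist y a) < e" using assms by (simp add: infdist_notempty)
  then show ?thesis using that cInf_lessD[of "dist y ` A" e] assms(1) by blast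
qed

lemma claim:
  fixes g :: "'a::euclidean_space \<Rightarrow> 'b::euclidean_space"
    and Dg :: "'a \<Rightarrow> ('a \<Rightarrow>\<^sub>L 'b)"
    and a :: "'c \<Rightarrow> 'b"
  assumes dg: "\<And>x. (g has_derivative blinfun_apply (Dg x)) (at x)"
    and fin: "finite F" and th: "\<Theta> = {x. \<forall>h\<in>F. a h \<bullet> x \<le> b h}"
    and xG: "g x \<in> \<Theta>" and U: "open U" "x \<in> U" and kap: "\<kappa> > 0"
    and ms: "\<forall>x\<in>U. infdist x {z. g z \<in> \<Theta>} \<le> \<kappa> * infdist (g x) \<Theta>"
    and v: "v \<in> regular_normal_cone {z. g z \<in> \<Theta>} x"
    and p: "p \<in> Kc F a b (g x)"
  shows "v \<bullet> w \<le> \<kappa> * norm v * norm (Dg x w - p)"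
proof -
  define \<Gamma> where "\<Gamma> = {z. g z \<in> \<Theta>}"
  define c where "c = norm (Dg x w - p)"
  define N1 where "N1 = norm w + \<kappa> * (norm w + c) + 1"
  define M where "M = N1 + norm v * \<kappa> * norm w + norm v"
  have c0: "c \<ge> 0" by (simp add: c_def)
  have N10: "N1 > 0" using kap c0 by (simp add: N1_def add_nonneg_pos)
  have M0: "M > 0" using N10 kap by (simp add: M_def add_pos_nonneg)
  have xG': "x \<in> \<Gamma>" using xG by (simp add: \<Gamma>_def)
  have key: "v \<bullet> w \<le> \<kappa> * norm v * c + \<epsilon> * M" if e: "0 < \<epsilon>" "\<epsilon> \<le> 1" for \<epsilon>
  proof -
    obtain \<delta> where \<delta>: "\<delta> > 0" "\<forall>u\<in>\<Gamma>. norm (u - x) < \<delta> \<longrightarrow> v \<bullet> (u - x) \<le> \<epsilon> * norm (u - x)"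
      using v xG' e(1) unfolding regular_normal_cone_def \<Gamma>_def by auto
    obtain d where d: "d > 0" "\<forall>y. norm (y - x) < d \<longrightarrow> norm (g y - g x - Dg x (y - x)) \<le> \<epsilon> * norm (y - x)"
      using dg[of x] e(1) unfolding has_derivative_within_alt by blast
    obtain r where r: "r > 0" "ball x r \<subseteq> U" using U open_contains_ball by blast
    have zF: "\<forall>h\<in>F. a h \<bullet> g x \<le> b h" using xG th by auto
    have "eventually (\<lambda>t. 0 < t \<and> t * norm w < r \<and> t * norm w < d \<and> t * N1 < \<delta>
              \<and> g x + t *\<^sub>R p \<in> \<Theta>) (at_right 0)"
      using feas[OF fin zF p] ev_small[OF r(1), of "norm w"] ev_small[OF d(1), of "norm w"]
        ev_small[OF \<delta>(1), of N1]
      by (auto simp: eventually_conj_iff eventually_at_filter th elim: eventually_mono)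
    then obtain t where t: "0 < t" "t * norm w < r" "t * norm w < d" "t * N1 < \<delta>" "g x + t *\<^sub>R p \<in> \<Theta>"
      using eventually_happens[of _ "at_right (0::real)"] by (auto simp: trivial_limit_at_right_real)
    have g1: "norm (g (x + t *\<^sub>R w) - g x - t *\<^sub>R Dg x w) \<le> \<epsilon> * (t * norm w)"
      using d(2)[rule_format, of "x + t *\<^sub>R w"] t(1,3) by (simp add: blinfun.scaleR_right)
    have i1: "infdist (g (x + t *\<^sub>R w)) \<Theta> \<le> t * (\<epsilon> * norm w + c)"
    proof -
      have "infdist (g (x + t *\<^sub>R w)) \<Theta> \<le> dist (g (x + t *\<^sub>R w)) (g x + t *\<^sub>R p)"
        by (rule infdist_le[OF t(5)])
      also have "\<dots> = norm ((g (x + t *\<^sub>R w) - g x - t *\<^sub>R Dg x w) + t *\<^sub>R (Dg x w - p))"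
        by (simp add: dist_norm algebra_simps)
      also have "\<dots> \<le> norm (g (x + t *\<^sub>R w) - g x - t *\<^sub>R Dg x w) + norm (t *\<^sub>R (Dg x w - p))"
        by (rule norm_triangle_ineq)
      also have "\<dots> \<le> \<epsilon> * (t * norm w) + t * c"
        using g1 t(1) by (simp add: c_def)
      finally show ?thesis by (simp add: algebra_simps)
    qed
    have xtU: "x + t *\<^sub>R w \<in> U" using r t(1,2) by (auto simp: dist_norm)
    have i2: "infdist (x + t *\<^sub>R w) \<Gamma> \<le> \<kappa> * (t * (\<epsilon> * norm w + c))"
      using ms xtU i1 kap unfolding \<Gamma>_def
      by (meson less_imp_le mult_left_mono order_trans)
    have "infdist (x + t *\<^sub>R w) \<Gamma> < \<kappa> * (t * (\<epsilon> * norm w + c)) + \<epsilon> * t"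
      using i2 mult_pos_pos[OF e(1) t(1)] by linarith
    then obtain u where u: "u \<in> \<Gamma>" "dist (x + t *\<^sub>R w) u < \<kappa> * (t * (\<epsilon> * norm w + c)) + \<epsilon> * t"
      using infdist_lt xG' by blast
    have nu: "norm (u - x) \<le> t * N1"
    proof -
      have "norm (u - x) \<le> norm (u - (x + t *\<^sub>R w)) + norm (t *\<^sub>R w)"
        using norm_triangle_ineq[of "u - (x + t *\<^sub>R w)" "t *\<^sub>R w"] by simp
      also have "\<dots> \<le> \<kappa> * (t * (\<epsilon> * norm w + c)) + \<epsilon> * t + t * norm w"
        using u(2) t(1) by (simp add: dist_norm norm_minus_commute)
      also have "\<dots> \<le> \<kappa> * (t * (1 * norm w + c)) + 1 * t + t * norm w"
        using e t(1) kap by (intro add_mono mult_left_mono mult_right_mono) auto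
      finally show ?thesis by (simp add: N1_def algebra_simps)
    qed
    have vu: "v \<bullet> (u - x) \<le> \<epsilon> * (t * N1)"
    proof -
      have "norm (u - x) < \<delta>" using nu t(4) by simp
      then have "v \<bullet> (u - x) \<le> \<epsilon> * norm (u - x)" using \<delta>(2) u(1) by blast
      also have "\<dots> \<le> \<epsilon> * (t * N1)" using nu e(1) by (simp add: mult_left_mono)
      finally show ?thesis .
    qed
    have vr: "v \<bullet> ((x + t *\<^sub>R w) - u) \<le> norm v * (\<kappa> * (t * (\<epsilon> * norm w + c)) + \<epsilon> * t)"
    proof -
      have "v \<bullet> ((x + t *\<^sub>R w) - u) \<le> norm v * norm ((x + t *\<^sub>R w) - u)"
        by (rule norm_cauchy_schwarz)
      also have "\<dots> \<le> norm v * (\<kappa> * (t * (\<epsilon> * norm w + c)) + \<epsilon> * t)"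
        using u(2) by (intro mult_left_mono) (auto simp: dist_norm)
      finally show ?thesis .
    qed
    have "t * (v \<bullet> w) = v \<bullet> (u - x) + v \<bullet> ((x + t *\<^sub>R w) - u)"
      by (simp add: algebra_simps)
    also have "\<dots> \<le> \<epsilon> * (t * N1) + norm v * (\<kappa> * (t * (\<epsilon> * norm w + c)) + \<epsilon> * t)"
      using vu vr by simp
    also have "\<dots> = t * (\<kappa> * norm v * c + \<epsilon> * M)"
      by (simp add: M_def algebra_simps)
    finally show ?thesis using t(1) by simp
  qed
  have "v \<bullet> w \<le> \<kappa> * norm v * c"
  proof (rule field_le_epsilon)
    fix e :: real assume e: "0 < e"
    define \<epsilon> where "\<epsilon> = min 1 (e / M)"
    have "0 < \<epsilon>" "\<epsilon> \<le> 1" using e M0 by (auto simp: \<epsilon>_def)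
    then have "v \<bullet> w \<le> \<kappa> * norm v * c + \<epsilon> * M" by (rule key)
    moreover have "\<epsilon> * M \<le> e" using e M0
      by (simp add: \<epsilon>_def min_def field_simps) 
    ultimately show "v \<bullet> w \<le> \<kappa> * norm v * c + e" by simp
  qed
  then show ?thesis by (simp add: c_def)
qed


lemma polar_sub_normal:
  fixes a :: "'c \<Rightarrow> 'b::euclidean_space"
  assumes th: "\<Theta> = {x. \<forall>h\<in>F. a h \<bullet> x \<le> b h}" and z: "z \<in> \<Theta>"
  shows "polar (Kc F a b z) \<subseteq> convex_normal_cone \<Theta> z"
proof
  fix y assume y: "y \<in> polar (Kc F a b z)"
  have "w - z \<in> Kc F a b z" if "w \<in> \<Theta>" for w
    using that th unfolding Kc_def act_def by (auto simp: inner_diff_right)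
  then show "y \<in> convex_normal_cone \<Theta> z"
    using y z unfolding polar_def convex_normal_cone_def by auto
qed

lemma Kc_cone: "d \<in> Kc F a b z \<Longrightarrow> 0 \<le> s \<Longrightarrow> s *\<^sub>R d \<in> Kc F a b z"
  unfolding Kc_def by (auto simp: mult_nonneg_nonpos)

lemma Kc_closed: "closed (Kc F a b z)"
proof -
  have "Kc F a b z = (\<Inter>h\<in>act F a b z. {d. a h \<bullet> d \<le> 0})" unfolding Kc_def by auto
  then show ?thesis by (auto intro!: closed_INT closed_halfspace_le)
qed

lemma Kc_convex: "convex (Kc F a b z)"
proof -
  have "Kc F a b z = (\<Inter>h\<in>act F a b z. {d. a h \<bullet> d \<le> 0})" unfolding Kc_def by auto
  then show ?thesis by (auto intro!: convex_INT convex_halfspace_le)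
qed

lemma polar_closed: "closed (polar K)"
proof -
  have "polar K = (\<Inter>d\<in>K. {y. d \<bullet> y \<le> 0})" unfolding polar_def by (auto simp: inner_commute)
  then show ?thesis by (auto intro!: closed_INT closed_halfspace_le)
qed

lemma polar_convex: "convex (polar K)"
proof -
  have "polar K = (\<Inter>d\<in>K. {y. d \<bullet> y \<le> 0})" unfolding polar_def by (auto simp: inner_commute)
  then show ?thesis by (auto intro!: convex_INT convex_halfspace_le)
qed

lemma pointwise:
  fixes g :: "'a::euclidean_space \<Rightarrow> 'b::euclidean_space"
    and Dg :: "'a \<Rightarrow> ('a \<Rightarrow>\<^sub>L 'b)"
    and a :: "'c \<Rightarrow> 'b"
  assumes dg: "\<And>x. (g has_derivative blinfun_apply (Dg x)) (at x)"
    and fin: "finite F" and th: "\<Theta> = {x. \<forall>h\<in>F. a h \<bullet> x \<le> b h}"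
    and xG: "g x \<in> \<Theta>" and U: "open U" "x \<in> U" and kap: "\<kappa> > 0"
    and ms: "\<forall>x\<in>U. infdist x {z. g z \<in> \<Theta>} \<le> \<kappa> * infdist (g x) \<Theta>"
    and v: "v \<in> regular_normal_cone {z. g z \<in> \<Theta>} x"
  shows "\<exists>y. y \<in> polar (Kc F a b (g x)) \<and> norm y \<le> \<kappa> * norm v \<and> v = adjoint (Dg x) y"
proof -
  define K where "K = Kc F a b (g x)"
  define R where "R = \<kappa> * norm v"
  define A where "A = blinfun_apply (Dg x)"
  define C where "C = adjoint A ` (polar K \<inter> cball 0 R)"
  have linA: "linear A" unfolding A_def by (simp add: blinfun.bounded_linear_right bounded_linear.linear)
  have linA': "linear (adjoint A)" by (rule adjoint_linear[OF linA])
  have R0: "R \<ge> 0" using kap by (simp add: R_def)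
  have cl: "v \<bullet> w \<le> R * norm (A w - p)" if "p \<in> K" for w p
    using claim[OF dg fin th xG U kap ms v, of p w] that unfolding K_def R_def A_def by simp
  have "v \<in> C"
  proof (rule ccontr)
    assume nv: "v \<notin> C"
    have cC: "compact C" unfolding C_def
      by (intro compact_continuous_image linear_continuous_on linear_conv_bounded_linear[THEN iffD1] linA'
          closed_Int_compact compact_cball polar_closed)
    have cvC: "convex C" unfolding C_def
      by (intro convex_linear_image linA' convex_Int polar_convex convex_cball)
    obtain c e where ce: "c \<bullet> v < e" "\<forall>x\<in>C. c \<bullet> x > e"
      using separating_hyperplane_closed_point[OF cvC compact_imp_closed[OF cC] nv] by blast
    define w where "w = - c"
    define u where "u = A w"
    have K0: "0 \<in> K" unfolding K_def Kc_def by simp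
    have Kcl: "closed K" "convex K" unfolding K_def by (simp_all add: Kc_closed Kc_convex)
    define p where "p = closest_point K u"
    have pK: "p \<in> K" unfolding p_def using closest_point_in_set[OF Kcl(1)] K0 by blast
    have dot: "(u - p) \<bullet> (k - p) \<le> 0" if "k \<in> K" for k
      unfolding p_def using closest_point_dot[OF Kcl(2,1) that] .
    have p2: "2 *\<^sub>R p \<in> K" using pK unfolding K_def by (intro Kc_cone) auto
    have up0: "(u - p) \<bullet> p = 0"
      using dot[OF K0] dot[OF p2] by (simp add: inner_diff_right algebra_simps)
    have upol: "(u - p) \<bullet> k \<le> 0" if "k \<in> K" for k
      using dot[OF that] up0 by (simp add: inner_diff_right)
    have C0: "0 \<in> C" unfolding C_def using R0
      by (auto simp: polar_def linear_0[OF linA'] intro!: image_eqI[of _ _ 0])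
    then have e0: "e < 0" using ce(2) by fastforce
    have cvw: "c \<bullet> v = - (v \<bullet> w)" by (simp add: w_def inner_commute)
    show False
    proof (cases "u = p")
      case True
      then have "v \<bullet> w \<le> 0" using cl[OF pK, of w] by (simp add: u_def)
      then show False using ce(1) e0 cvw by simp
    next
      case False
      then have np: "norm (u - p) > 0" by simp
      define y where "y = (R / norm (u - p)) *\<^sub>R (u - p)"
      have ypol: "y \<in> polar K" unfolding polar_def y_def
        using upol R0 np by (auto simp: mult_nonneg_nonpos divide_nonpos_pos)
      have ny: "norm y = R" unfolding y_def using R0 np by simp
      have "adjoint A y \<in> C" unfolding C_def using ypol ny by auto
      then have "c \<bullet> adjoint A y > e" using ce(2) by blast
      moreover have "c \<bullet> adjoint A y = - (u \<bullet> y)"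
        using adjoint_works[OF linA, of c y] linear_neg[OF linA, of c]
        by (simp add: u_def w_def)
      moreover have "u \<bullet> y = R * norm (u - p)"
      proof -
        have "u \<bullet> (u - p) = (u - p) \<bullet> (u - p) + p \<bullet> (u - p)" by (simp add: algebra_simps)
        also have "\<dots> = norm (u - p) ^ 2" using up0 by (simp add: inner_commute power2_norm_eq_inner)
        finally show ?thesis using np by (simp add: y_def power2_eq_square)
      qed
      moreover have "v \<bullet> w \<le> R * norm (u - p)" using cl[OF pK, of w] by (simp add: u_def)
      ultimately show False using ce(1) cvw by linarith
    qed
  qed
  then obtain y where "y \<in> polar K" "norm y \<le> R" "v = adjoint A y"
    unfolding C_def by auto
  then show ?thesis unfolding K_def R_def A_def by blast
qed


lemma stepA:
  fixes g :: "'a::euclidean_space \<Rightarrow> 'b::euclidean_space"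
    and Dg :: "'a \<Rightarrow> ('a \<Rightarrow>\<^sub>L 'b)"
    and D2g :: "'a \<Rightarrow> ('a \<Rightarrow>\<^sub>L ('a \<Rightarrow>\<^sub>L 'b))"
    and a :: "'c \<Rightarrow> 'b"
  assumes dg: "\<And>x. (g has_derivative blinfun_apply (Dg x)) (at x)"
    and d2g: "\<And>x. (Dg has_derivative blinfun_apply (D2g x)) (at x)"
    and fin: "finite F" and th: "\<Theta> = {x. \<forall>h\<in>F. a h \<bullet> x \<le> b h}"
    and xbar_in: "g xbar \<in> \<Theta>"
    and mscq: "MSCQ g \<Theta> xbar"
    and vbar: "vbar \<in> limiting_normal_cone {x. g x \<in> \<Theta>} xbar"
  shows "\<exists>l \<in> convex_cone hull (a ` act F a b (g xbar)). vbar = adjoint (Dg xbar) l"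
proof -
  define CH where "CH = convex_cone hull (a ` act F a b (g xbar))"
  obtain xs vs where xv: "\<And>k. g (xs k) \<in> \<Theta>" "\<And>k. vs k \<in> regular_normal_cone {x. g x \<in> \<Theta>} (xs k)"
    "xs \<longlonglongrightarrow> xbar" "vs \<longlonglongrightarrow> vbar"
    using vbar xbar_in unfolding limiting_normal_cone_def by auto
  obtain U \<kappa> where U: "open U" "xbar \<in> U" "\<kappa> > 0"
    "\<forall>x\<in>U. infdist x {z. g z \<in> \<Theta>} \<le> \<kappa> * infdist (g x) \<Theta>"
    using mscq unfolding MSCQ_def by blast
  have gc: "isCont g xbar" using has_derivative_continuous[OF dg] by (simp add: continuous_at)
  have Dgc: "isCont Dg xbar" using has_derivative_continuous[OF d2g] by (simp add: continuous_at)
  have gxs: "(\<lambda>k. g (xs k)) \<longlonglongrightarrow> g xbar" using isCont_tendsto_compose[OF gc xv(3)] .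
  have ev1: "eventually (\<lambda>k. xs k \<in> U) sequentially"
    using topological_tendstoD[OF xv(3) U(1,2)] .
  have "eventually (\<lambda>k. a h \<bullet> g (xs k) < b h) sequentially"
    if "h \<in> F" "h \<notin> act F a b (g xbar)" for h
  proof -
    have "a h \<bullet> g xbar < b h" using that xbar_in th unfolding act_def by force
    moreover have "(\<lambda>k. a h \<bullet> g (xs k)) \<longlonglongrightarrow> a h \<bullet> g xbar" by (intro tendsto_intros gxs)
    ultimately show ?thesis by (simp add: order_tendstoD(2))
  qed
  then have "eventually (\<lambda>k. \<forall>h\<in>F - act F a b (g xbar). a h \<bullet> g (xs k) < b h) sequentially"
    using fin by (simp add: eventually_ball_finite)
  then have ev2: "eventually (\<lambda>k. act F a b (g (xs k)) \<subseteq> act F a b (g xbar)) sequentially"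
    by (rule eventually_mono) (force simp: act_def)
  obtain N where N: "\<And>k. k \<ge> N \<Longrightarrow> xs k \<in> U \<and> act F a b (g (xs k)) \<subseteq> act F a b (g xbar)"
    using eventually_conj[OF ev1 ev2] unfolding eventually_sequentially by blast
  have "\<exists>y. y \<in> CH \<and> norm y \<le> \<kappa> * norm (vs (k + N)) \<and> vs (k + N) = adjoint (Dg (xs (k + N))) y" for k
  proof -
    have k: "xs (k + N) \<in> U" "act F a b (g (xs (k + N))) \<subseteq> act F a b (g xbar)" using N[of "k + N"] by auto
    obtain y where y: "y \<in> polar (Kc F a b (g (xs (k + N))))" "norm y \<le> \<kappa> * norm (vs (k + N))"
      "vs (k + N) = adjoint (Dg (xs (k + N))) y"
      using pointwise[OF dg fin th xv(1) U(1) k(1) U(3) U(4) xv(2)] by blast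
    have "y \<in> convex_normal_cone \<Theta> (g (xs (k + N)))"
      using polar_sub_normal[OF th xv(1)] y(1) by blast
    then have "y \<in> convex_cone hull (a ` act F a b (g (xs (k + N))))"
      using farkas[OF fin th xv(1)] by blast
    moreover have "convex_cone hull (a ` act F a b (g (xs (k + N)))) \<subseteq> CH"
      unfolding CH_def by (intro hull_mono image_mono k(2))
    ultimately show ?thesis using y by blast
  qed
  then obtain ys where ys: "\<And>k. ys k \<in> CH" "\<And>k. norm (ys k) \<le> \<kappa> * norm (vs (k + N))"
    "\<And>k. vs (k + N) = adjoint (Dg (xs (k + N))) (ys k)"
    by metis
  obtain B where B: "B > 0" "\<And>k. norm (vs k) \<le> B"
    using convergent_imp_Bseq[of vs] xv(4) BseqE by (metis convergentI)
  have ysb: "ys k \<in> cball 0 (\<kappa> * B)" for k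
    using ys(2)[of k] B(2)[of "k + N"] U(3) by (simp add: order_trans mult_left_mono)
  obtain l r where lr: "l \<in> cball 0 (\<kappa> * B)" "strict_mono r" "(ys \<circ> r) \<longlonglongrightarrow> l"
    using seq_compactE[OF compact_imp_seq_compact[OF compact_cball], of ys] ysb by metis
  have finCH: "finite (a ` act F a b (g xbar))" using fin unfolding act_def by simp
  have lCH: "l \<in> CH"
    using closed_sequentially[OF closed_convex_cone_hull[OF finCH], of "ys \<circ> r" l] ys(1) lr(3)
    unfolding CH_def by auto
  have xs': "(\<lambda>k. xs (r k + N)) \<longlonglongrightarrow> xbar"
    using LIMSEQ_subseq_LIMSEQ[OF LIMSEQ_ignore_initial_segment[OF xv(3), of N] lr(2)]
    by (simp add: o_def)
  have vs': "(\<lambda>k. vs (r k + N)) \<longlonglongrightarrow> vbar"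
    using LIMSEQ_subseq_LIMSEQ[OF LIMSEQ_ignore_initial_segment[OF xv(4), of N] lr(2)]
    by (simp add: o_def)
  have ys': "(\<lambda>k. ys (r k)) \<longlonglongrightarrow> l" using lr(3) by (simp add: o_def)
  have Dxs: "(\<lambda>k. Dg (xs (r k + N))) \<longlonglongrightarrow> Dg xbar"
    using isCont_tendsto_compose[OF Dgc xs'] .
  have lin: "linear (blinfun_apply L)" for L :: "'a \<Rightarrow>\<^sub>L 'b"
    by (simp add: blinfun.bounded_linear_right bounded_linear.linear)
  have eq: "e \<bullet> vbar = e \<bullet> adjoint (Dg xbar) l" for e
  proof -
    have "(\<lambda>k. e \<bullet> vs (r k + N)) \<longlonglongrightarrow> e \<bullet> vbar" by (intro tendsto_intros vs')
    moreover have "(\<lambda>k. e \<bullet> vs (r k + N)) = (\<lambda>k. Dg (xs (r k + N)) e \<bullet> ys (r k))"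
      using ys(3) adjoint_works[OF lin] by metis
    moreover have "(\<lambda>k. Dg (xs (r k + N)) e \<bullet> ys (r k)) \<longlonglongrightarrow> Dg xbar e \<bullet> l"
      by (intro tendsto_intros Dxs ys')
    ultimately have "e \<bullet> vbar = Dg xbar e \<bullet> l" using LIMSEQ_unique by metis
    then show ?thesis using adjoint_works[OF lin] by metis
  qed
  have "vbar = adjoint (Dg xbar) l"
    using eq[of "vbar - adjoint (Dg xbar) l"] by (simp add: inner_diff_left inner_commute)
      (metis eq eq_iff_diff_eq_0 inner_diff_right inner_eq_zero_iff)
  then show ?thesis using lCH unfolding CH_def by blast
qed


lemma derivs:
  fixes g :: "'a::euclidean_space \<Rightarrow> 'b::euclidean_space"
    and Dg :: "'a \<Rightarrow> ('a \<Rightarrow>\<^sub>L 'b)"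
    and D2g :: "'a \<Rightarrow> ('a \<Rightarrow>\<^sub>L ('a \<Rightarrow>\<^sub>L 'b))"
  assumes dg: "\<And>x. (g has_derivative blinfun_apply (Dg x)) (at x)"
    and d2g: "\<And>x. (Dg has_derivative blinfun_apply (D2g x)) (at x)"
  shows "((\<lambda>s. y \<bullet> g (x + s *\<^sub>R h)) has_real_derivative (y \<bullet> Dg (x + s *\<^sub>R h) h)) (at s)"
    "((\<lambda>s. y \<bullet> Dg (x + s *\<^sub>R h) h) has_real_derivative (y \<bullet> D2g (x + s *\<^sub>R h) h h)) (at s)"
proof -
  have p: "((\<lambda>s. x + s *\<^sub>R h) has_derivative (\<lambda>s. s *\<^sub>R h)) (at s)"
    by (auto intro!: derivative_eq_intros)
  have "((\<lambda>s. g (x + s *\<^sub>R h)) has_derivative (\<lambda>t. Dg (x + s *\<^sub>R h) (t *\<^sub>R h))) (at s)"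
    using has_derivative_compose[OF p dg] by (simp add: o_def)
  then have "((\<lambda>s. y \<bullet> g (x + s *\<^sub>R h)) has_derivative (\<lambda>t. y \<bullet> Dg (x + s *\<^sub>R h) (t *\<^sub>R h))) (at s)"
    by (auto intro!: derivative_eq_intros)
  then show "((\<lambda>s. y \<bullet> g (x + s *\<^sub>R h)) has_real_derivative (y \<bullet> Dg (x + s *\<^sub>R h) h)) (at s)"
    by (simp add: has_field_derivative_def blinfun.scaleR_right scaleR_blinfun.rep_eq mult_commute_abs)
  have "((\<lambda>s. Dg (x + s *\<^sub>R h)) has_derivative (\<lambda>t. D2g (x + s *\<^sub>R h) (t *\<^sub>R h))) (at s)"
    using has_derivative_compose[OF p d2g] by (simp add: o_def)
  then have "((\<lambda>s. y \<bullet> Dg (x + s *\<^sub>R h) h) has_derivative (\<lambda>t. y \<bullet> D2g (x + s *\<^sub>R h) (t *\<^sub>R h) h)) (at s)"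
    by (auto intro!: derivative_eq_intros)
  then show "((\<lambda>s. y \<bullet> Dg (x + s *\<^sub>R h) h) has_real_derivative (y \<bullet> D2g (x + s *\<^sub>R h) h h)) (at s)"
    by (simp add: has_field_derivative_def blinfun.scaleR_right scaleR_blinfun.rep_eq mult_commute_abs)
qed

lemma taylor2:
  fixes g :: "'a::euclidean_space \<Rightarrow> 'b::euclidean_space"
    and Dg :: "'a \<Rightarrow> ('a \<Rightarrow>\<^sub>L 'b)"
    and D2g :: "'a \<Rightarrow> ('a \<Rightarrow>\<^sub>L ('a \<Rightarrow>\<^sub>L 'b))"
  assumes dg: "\<And>x. (g has_derivative blinfun_apply (Dg x)) (at x)"
    and d2g: "\<And>x. (Dg has_derivative blinfun_apply (D2g x)) (at x)"
  shows "\<exists>\<xi>. 0 < \<xi> \<and> \<xi> < 1 \<and> y \<bullet> g (x + h) = y \<bullet> g x + y \<bullet> Dg x h + (y \<bullet> D2g (x + \<xi> *\<^sub>R h) h h) / 2"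
proof -
  define diff where "diff = (\<lambda>m::nat. if m = 0 then (\<lambda>s. y \<bullet> g (x + s *\<^sub>R h))
     else if m = 1 then (\<lambda>s. y \<bullet> Dg (x + s *\<^sub>R h) h) else (\<lambda>s. y \<bullet> D2g (x + s *\<^sub>R h) h h))"
  have D: "\<forall>m t. m < 2 \<and> 0 \<le> t \<and> t \<le> 1 \<longrightarrow> (diff m has_real_derivative diff (Suc m) t) (at t)"
  proof (intro allI impI)
    fix m :: nat and t :: real assume "m < 2 \<and> 0 \<le> t \<and> t \<le> 1"
    then have "m = 0 \<or> m = 1" by auto
    then show "(diff m has_real_derivative diff (Suc m) t) (at t)"
      using derivs[OF dg d2g, of y x h t] by (auto simp: diff_def)
  qed
  obtain t where t: "0 < t" "t < 1"
    "diff 0 1 = (\<Sum>m<2. (diff m 0 / fact m) * (1 - 0)^m) + (diff 2 t / fact 2) * (1 - 0)^2"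
    using Taylor_up[of 2 diff "diff 0" 0 1 0] D by auto
  then show ?thesis
    by (intro exI[of _ t]) (simp add: diff_def numeral_2_eq_2)
qed

lemma stepB:
  fixes g :: "'a::euclidean_space \<Rightarrow> 'b::euclidean_space"
    and Dg :: "'a \<Rightarrow> ('a \<Rightarrow>\<^sub>L 'b)"
    and D2g :: "'a \<Rightarrow> ('a \<Rightarrow>\<^sub>L ('a \<Rightarrow>\<^sub>L 'b))"
  assumes dg: "\<And>x. (g has_derivative blinfun_apply (Dg x)) (at x)"
    and d2g: "\<And>x. (Dg has_derivative blinfun_apply (D2g x)) (at x)"
    and d2g_cont: "continuous_on UNIV D2g"
    and y: "\<forall>w\<in>\<Theta>. y \<bullet> (w - g xbar) \<le> 0"
    and adj0: "\<And>e. y \<bullet> Dg xbar e = 0"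
    and v: "v \<in> tangent_cone {x. g x \<in> \<Theta>} xbar"
  shows "y \<bullet> D2g xbar v v \<le> 0"
proof -
  obtain t ws where tw: "\<And>k. t k > 0" "\<And>k. g (xbar + t k *\<^sub>R ws k) \<in> \<Theta>"
    "t \<longlonglongrightarrow> 0" "ws \<longlonglongrightarrow> v"
    using v unfolding tangent_cone_def by auto
  have "\<exists>\<xi>. 0 < \<xi> \<and> \<xi> < 1 \<and> y \<bullet> D2g (xbar + \<xi> *\<^sub>R (t k *\<^sub>R ws k)) (ws k) (ws k) \<le> 0" for k
  proof -
    obtain \<xi> where xi: "0 < \<xi>" "\<xi> < 1"
      "y \<bullet> g (xbar + t k *\<^sub>R ws k) = y \<bullet> g xbar + y \<bullet> Dg xbar (t k *\<^sub>R ws k)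
         + (y \<bullet> D2g (xbar + \<xi> *\<^sub>R (t k *\<^sub>R ws k)) (t k *\<^sub>R ws k) (t k *\<^sub>R ws k)) / 2"
      using taylor2[OF dg d2g] by blast
    have "y \<bullet> (g (xbar + t k *\<^sub>R ws k) - g xbar) \<le> 0" using y tw(2) by blast
    then have "(y \<bullet> D2g (xbar + \<xi> *\<^sub>R (t k *\<^sub>R ws k)) (t k *\<^sub>R ws k) (t k *\<^sub>R ws k)) \<le> 0"
      using xi(3) adj0 by (simp add: inner_diff_right)
    then have "(t k * t k) * (y \<bullet> D2g (xbar + \<xi> *\<^sub>R (t k *\<^sub>R ws k)) (ws k) (ws k)) \<le> 0"
      by (simp add: blinfun.scaleR_right scaleR_blinfun.rep_eq)
    then have "y \<bullet> D2g (xbar + \<xi> *\<^sub>R (t k *\<^sub>R ws k)) (ws k) (ws k) \<le> 0"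
      using tw(1)[of k] by (simp add: mult_le_0_iff)
    then show ?thesis using xi by blast
  qed
  then obtain \<xi> where xi: "\<And>k. 0 < \<xi> k" "\<And>k. \<xi> k < 1"
    "\<And>k. y \<bullet> D2g (xbar + \<xi> k *\<^sub>R (t k *\<^sub>R ws k)) (ws k) (ws k) \<le> 0"
    by metis
  have pk: "(\<lambda>k. xbar + \<xi> k *\<^sub>R (t k *\<^sub>R ws k)) \<longlonglongrightarrow> xbar"
  proof -
    have "(\<lambda>k. t k * norm (ws k)) \<longlonglongrightarrow> 0 * norm v"
      by (intro tendsto_intros tw)
    then have t0: "(\<lambda>k. t k * norm (ws k)) \<longlonglongrightarrow> 0" by simp
    have "norm (\<xi> k *\<^sub>R (t k *\<^sub>R ws k)) \<le> t k * norm (ws k)" for k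
    proof -
      have "norm (\<xi> k *\<^sub>R (t k *\<^sub>R ws k)) = \<xi> k * (t k * norm (ws k))"
        using xi(1)[of k] tw(1)[of k] by simp
      also have "\<dots> \<le> 1 * (t k * norm (ws k))"
        using xi(2)[of k] tw(1)[of k] by (intro mult_right_mono) auto
      finally show ?thesis by simp
    qed
    then have "(\<lambda>k. \<xi> k *\<^sub>R (t k *\<^sub>R ws k)) \<longlonglongrightarrow> 0"
      by (intro Lim_null_comparison[OF _ t0] always_eventually) auto
    from tendsto_add[OF tendsto_const this] show ?thesis by simp
  qed
  have "isCont D2g xbar" using d2g_cont by (simp add: continuous_on_eq_continuous_at)
  then have "(\<lambda>k. D2g (xbar + \<xi> k *\<^sub>R (t k *\<^sub>R ws k))) \<longlonglongrightarrow> D2g xbar"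
    using pk isCont_tendsto_compose by blast
  then have "(\<lambda>k. y \<bullet> D2g (xbar + \<xi> k *\<^sub>R (t k *\<^sub>R ws k)) (ws k) (ws k)) \<longlonglongrightarrow> y \<bullet> D2g xbar v v"
    by (intro tendsto_intros tw)
  then show ?thesis
    by (rule tendsto_upperbound) (use xi(3) in \<open>auto intro!: always_eventually simp del: scaleR_scaleR\<close>)
qed


theorem lemma8p2:
  fixes g :: "'a::euclidean_space \<Rightarrow> 'b::euclidean_space"
    and Dg :: "'a \<Rightarrow> ('a \<Rightarrow>\<^sub>L 'b)"
    and D2g :: "'a \<Rightarrow> ('a \<Rightarrow>\<^sub>L ('a \<Rightarrow>\<^sub>L 'b))"
    and \<Theta> :: "'b set" and xbar vbar :: 'a
  assumes poly: "polyhedron \<Theta>" and ne: "\<Theta> \<noteq> {}" and conv: "convex \<Theta>"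
    and dg: "\<And>x. (g has_derivative blinfun_apply (Dg x)) (at x)"
    and d2g: "\<And>x. (Dg has_derivative blinfun_apply (D2g x)) (at x)"
    and d2g_cont: "continuous_on UNIV D2g"
    and xbar_in: "g xbar \<in> \<Theta>"
    and mscq: "MSCQ g \<Theta> xbar"
    and vbar: "vbar \<in> limiting_normal_cone {x. g x \<in> \<Theta>} xbar"
  shows "\<forall>v \<in> critical_cone {x. g x \<in> \<Theta>} xbar vbar.
           (let P = {y. vbar = adjoint (blinfun_apply (Dg xbar)) y
                        \<and> y \<in> convex_normal_cone \<Theta> (g xbar)};
                q = (\<lambda>y. y \<bullet> blinfun_apply (blinfun_apply (D2g xbar) v) v)
            in {y \<in> P. \<forall>z\<in>P. q z \<le> q y} \<noteq> {})"
proof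
  fix v assume vK: "v \<in> critical_cone {x. g x \<in> \<Theta>} xbar vbar"
  then have vT: "v \<in> tangent_cone {x. g x \<in> \<Theta>} xbar" by (simp add: critical_cone_def)
  obtain F :: "'b set set" and a b where fin: "finite F" and th: "\<Theta> = {x. \<forall>h\<in>F. a h \<bullet> x \<le> b h}"
    using poly_repr[OF poly] by blast
  define A where "A = blinfun_apply (Dg xbar)"
  have linA: "linear A" unfolding A_def by (simp add: blinfun.bounded_linear_right bounded_linear.linear)
  define adj where "adj = adjoint A"
  have ladj: "linear adj" unfolding adj_def by (rule adjoint_linear[OF linA])
  define q where "q = (\<lambda>y. y \<bullet> blinfun_apply (blinfun_apply (D2g xbar) v) v)"
  define P where "P = {y. vbar = adj y \<and> y \<in> convex_normal_cone \<Theta> (g xbar)}"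
  define CH where "CH = convex_cone hull (a ` act F a b (g xbar))"
  have NCH: "convex_normal_cone \<Theta> (g xbar) = CH"
    using farkas[OF fin th xbar_in] normal_cone_sub[OF th xbar_in] unfolding CH_def by blast
  define \<phi> where "\<phi> = (\<lambda>y. (adj y, q y))"
  have lphi: "linear \<phi>" unfolding \<phi>_def q_def
    by (intro linearI) (auto simp: linear_add[OF ladj] linear_scale[OF ladj] inner_add_left)
  define C where "C = \<phi> ` CH"
  have finA: "finite (a ` act F a b (g xbar))" using fin unfolding act_def by simp
  have Ceq: "C = convex_cone hull (\<phi> ` a ` act F a b (g xbar))"
    unfolding C_def CH_def using convex_cone_hull_linear_image[OF lphi] by metis
  have clC: "closed C" unfolding Ceq using finA by (intro closed_convex_cone_hull) simp
  define S where "S = {s. (vbar, s) \<in> C}"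
  obtain l where l: "l \<in> CH" "vbar = adj l"
    using stepA[OF dg d2g fin th xbar_in mscq vbar] unfolding CH_def adj_def A_def by blast
  have Sne: "S \<noteq> {}" using l unfolding S_def C_def \<phi>_def by auto
  have clS: "closed S"
  proof -
    have "S = (\<lambda>s. (vbar, s)) -` C" unfolding S_def by auto
    then show ?thesis using clC by (simp add: continuous_closed_vimage continuous_intros)
  qed
  have noy: False if y0: "y0 \<in> CH" "adj y0 = 0" "q y0 = 1" for y0
  proof -
    have yN: "\<forall>w\<in>\<Theta>. y0 \<bullet> (w - g xbar) \<le> 0"
      using y0(1) NCH xbar_in unfolding convex_normal_cone_def by auto
    have "y0 \<bullet> Dg xbar e = 0" for e
      using adjoint_works[OF linA, of e y0] y0(2) by (simp add: adj_def A_def inner_commute)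
    then have "q y0 \<le> 0" using stepB[OF dg d2g d2g_cont yN _ vT] unfolding q_def by blast
    then show False using y0(3) by simp
  qed
  have bS: "bdd_above S"
  proof (rule ccontr)
    assume nb: "\<not> bdd_above S"
    have "\<exists>s\<in>S. real (Suc n) < s" for n
      using nb unfolding bdd_above_def by (meson not_le)
    then obtain sn where sn: "\<And>n. sn n \<in> S" "\<And>n. real (Suc n) < sn n" by metis
    have sp: "sn n > 0" for n using sn(2)[of n] by (smt (verit) of_nat_0_le_iff)
    have inC: "(inverse (sn n) *\<^sub>R vbar, 1) \<in> C" for n
    proof -
      have "inverse (sn n) *\<^sub>R (vbar, sn n) \<in> C"
        unfolding Ceq using sn(1)[of n] sp[of n] unfolding S_def Ceq
        by (intro convex_cone_hull_mul) auto
      then show ?thesis using sp[of n] by simp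
    qed
    have "(\<lambda>n. inverse (sn n) *\<^sub>R vbar) \<longlonglongrightarrow> 0"
    proof -
      have "(\<lambda>n. inverse (real (Suc n)) * norm vbar) \<longlonglongrightarrow> 0 * norm vbar"
        by (intro tendsto_intros LIMSEQ_inverse_real_of_nat)
      then have t0: "(\<lambda>n. inverse (real (Suc n)) * norm vbar) \<longlonglongrightarrow> 0" by simp
      have bnd: "norm (inverse (sn n) *\<^sub>R vbar) \<le> inverse (real (Suc n)) * norm vbar" for n
      proof -
        have "inverse (sn n) \<le> inverse (real (Suc n))"
          using sn(2)[of n] by (intro le_imp_inverse_le) auto
        then have "inverse (sn n) * norm vbar \<le> inverse (real (Suc n)) * norm vbar"
          by (rule mult_right_mono) simp
        then show ?thesis using sp[of n] by simp
      qed
      show ?thesis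
        by (rule Lim_null_comparison[OF always_eventually[OF allI[OF bnd]] t0])
    qed
    then have "(\<lambda>n. (inverse (sn n) *\<^sub>R vbar, 1::real)) \<longlonglongrightarrow> (0, 1)"
      by (intro tendsto_Pair) auto
    then have "(0, 1) \<in> C" using closed_sequentially[of C "\<lambda>n. (inverse (sn n) *\<^sub>R vbar, 1::real)" "(0,1)"] clC inC by blast
    then obtain y0 where "y0 \<in> CH" "adj y0 = 0" "q y0 = 1" unfolding C_def \<phi>_def by auto
    then show False using noy by blast
  qed
  have "Sup S \<in> S" using closed_contains_Sup[OF Sne bS clS] .
  then obtain ys where ys: "ys \<in> CH" "adj ys = vbar" "q ys = Sup S"
    unfolding S_def C_def \<phi>_def by auto
  have "ys \<in> P" using ys NCH unfolding P_def by auto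
  moreover have "q z \<le> q ys" if "z \<in> P" for z
  proof -
    have "z \<in> CH" "adj z = vbar" using that NCH unfolding P_def by auto
    then have "q z \<in> S" unfolding S_def C_def \<phi>_def by auto
    then show ?thesis using ys(3) bS by (simp add: cSup_upper)
  qed
  ultimately have "{y \<in> P. \<forall>z\<in>P. q z \<le> q y} \<noteq> {}" by blast
  then show "let P = {y. vbar = adjoint (blinfun_apply (Dg xbar)) y
                        \<and> y \<in> convex_normal_cone \<Theta> (g xbar)};
                q = (\<lambda>y. y \<bullet> blinfun_apply (blinfun_apply (D2g xbar) v) v)
            in {y \<in> P. \<forall>z\<in>P. q z \<le> q y} \<noteq> {}"
    unfolding P_def q_def adj_def A_def Let_def .
qed

end
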